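(* Let $r\ge 2$ be an even integer, $T>0$, and let $u$ be a smooth function on $[a,b]\times[0,T]$ with $u(a,t)=u(b,t)=0$. Let $S[u]=\int_0^T\int_a^b \frac1r|u_x|^r\,dx\,dt$. For smooth $w(x,t)$ with $w(x,0)=w(x,T)=0$, consider the constrained variation $\delta u=w_t-wu_x+uw_x$, and the first variation $\delta S=\int_0^T\int_a^b |u_x|^{r-2}u_x\,(\delta u)_x\,dx\,dt$. Then $$\delta S=\int_0^T\int_a^b\Big(\big(|u_x|^{r-2}u_x\big)_{xt}+\big(|u_x|^{r-2}u_x\big)_xu_x+\Big(\big(|u_x|^{r-2}u_x\big)_xu\Big)_x\Big)w\,dx\,dt,$$ so that $\delta S=0$ for all such $w$ if and only if $u$ satisfies the $r$-Hunter-Saxton equation $$\big(|u_x|^{r-2}u_x\big)_{xt}+\big(|u_x|^{r-2}u_x\big)_xu_x+\Big(\big(|u_x|^{r-2}u_x\big)_xu\Big)_x=0.$$ That is, the $r$-Hunter-Saxton equation is the Euler-Poincaré equation for the Lagrangian $l[u]=\int_a^b\frac1r|u_x|^r\,dx$.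
   Context: The constrained variations $\delta u=w_t-wu_x+uw_x$ are those induced on the Eulerian velocity $u$ by variations of a time-dependent family of diffeomorphisms $g$ of $[a,b]$ with $g_t(x,t)=u(g(x,t),t)$; the Euler-Poincaré equation is the stationarity condition of the action under such variations. *)

theory Defs
  imports "HOL-Analysis.Analysis"
begin

text \<open>Functions on the space-time rectangle are functions of the pair (x,t).
  Partial derivatives are taken within the closed set S (one-sided at the boundary).\<close>

definition px :: "(real \<times> real) set \<Rightarrow> (real \<times> real \<Rightarrow> real) \<Rightarrow> real \<times> real \<Rightarrow> real" where
  "px S f p = frechet_derivative f (at p within S) (1, 0)"

definition pt :: "(real \<times> real) set \<Rightarrow> (real \<times> real \<Rightarrow> real) \<Rightarrow> real \<times> real \<Rightarrow> real" where
  "pt S f p = frechet_derivative f (at p within S) (0, 1)"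

text \<open>Smoothness (C-infinity) on a closed set S: differentiable within S at every point of S,
  with both partial derivatives again smooth on S.\<close>

coinductive C_inf_on :: "(real \<times> real) set \<Rightarrow> (real \<times> real \<Rightarrow> real) \<Rightarrow> bool" where
  "(\<forall>p\<in>S. f differentiable (at p within S)) \<Longrightarrow> C_inf_on S (px S f) \<Longrightarrow> C_inf_on S (pt S f)
   \<Longrightarrow> C_inf_on S f"

definition rect :: "real \<Rightarrow> real \<Rightarrow> real \<Rightarrow> (real \<times> real) set" where
  "rect a b T = {a..b} \<times> {0..T}"

definition flux :: "nat \<Rightarrow> (real \<times> real) set \<Rightarrow> (real \<times> real \<Rightarrow> real) \<Rightarrow> real \<times> real \<Rightarrow> real" where
  "flux r S u p = \<bar>px S u p\<bar> ^ (r - 2) * px S u p"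

definition var_u :: "(real \<times> real) set \<Rightarrow> (real \<times> real \<Rightarrow> real) \<Rightarrow> (real \<times> real \<Rightarrow> real) \<Rightarrow> real \<times> real \<Rightarrow> real" where
  "var_u S u w p = pt S w p - w p * px S u p + u p * px S w p"

definition first_var :: "nat \<Rightarrow> real \<Rightarrow> real \<Rightarrow> real \<Rightarrow> (real \<times> real \<Rightarrow> real) \<Rightarrow> (real \<times> real \<Rightarrow> real) \<Rightarrow> real" where
  "first_var r a b T u w =
     integral {0..T} (\<lambda>t. integral {a..b} (\<lambda>x.
        flux r (rect a b T) u (x, t) * px (rect a b T) (var_u (rect a b T) u w) (x, t)))"

definition rHS :: "nat \<Rightarrow> (real \<times> real) set \<Rightarrow> (real \<times> real \<Rightarrow> real) \<Rightarrow> real \<times> real \<Rightarrow> real" where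
  "rHS r S u p = pt S (px S (flux r S u)) p + px S (flux r S u) p * px S u p
      + px S (\<lambda>q. px S (flux r S u) q * u q) p"

text \<open>Admissible variation fields: smooth, vanishing at t = 0, T and (being generated by
  diffeomorphisms of [a,b]) at x = a, b.\<close>
definition admissible :: "real \<Rightarrow> real \<Rightarrow> real \<Rightarrow> (real \<times> real \<Rightarrow> real) \<Rightarrow> bool" where
  "admissible a b T w \<longleftrightarrow> C_inf_on (rect a b T) w
     \<and> (\<forall>x\<in>{a..b}. w (x, 0) = 0 \<and> w (x, T) = 0)
     \<and> (\<forall>t\<in>{0..T}. w (a, t) = 0 \<and> w (b, t) = 0)"

end

theory Submission
  imports Defs
begin

context fixes a b T :: real assumes ab: "a < b" and T0: "0 < T"
begin

lemma rect_cbox: "rect a b T = cbox (a,0) (b,T)"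
  by (simp add: rect_def cbox_Pair_eq)

lemma FD:
  assumes "p \<in> rect a b T" "(f has_derivative f') (at p within rect a b T)"
  shows "frechet_derivative f (at p within rect a b T) = f'"
proof -
  have d: "f differentiable (at p within rect a b T)" using assms(2) by (auto simp: differentiable_def)
  show ?thesis
    unfolding rect_cbox
    apply (rule frechet_derivative_unique_within_closed_interval[of "(a,0)" "(b,T)" p f])
    using ab T0 apply (auto simp: Basis_prod_def)[1]
    using assms(1) rect_cbox apply simp
    using d frechet_derivative_works[of f] rect_cbox apply simp
    using assms(2) rect_cbox by simp
qed

lemma pxpt_of:
  assumes "p \<in> rect a b T" "(f has_derivative f') (at p within rect a b T)"
  shows "px (rect a b T) f p = f' (1,0)" "pt (rect a b T) f p = f' (0,1)"
  using FD[OF assms] by (auto simp: px_def pt_def)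

lemma hd:
  assumes "f differentiable (at p within rect a b T)"
  shows "(f has_derivative (\<lambda>h. fst h * px (rect a b T) f p + snd h * pt (rect a b T) f p)) (at p within rect a b T)"
proof -
  let ?D = "frechet_derivative f (at p within rect a b T)"
  have fd: "(f has_derivative ?D) (at p within rect a b T)" using assms frechet_derivative_works by blast
  then have lin: "linear ?D" using has_derivative_linear by blast
  have eq: "?D h = fst h * ?D (1,0) + snd h * ?D (0,1)" for h
  proof -
    obtain x y where h: "h = (x,y)" by (cases h)
    have A: "\<And>u v. ?D (u + v) = ?D u + ?D v" and B: "\<And>c u. ?D (c *\<^sub>R u) = c *\<^sub>R ?D u"
      using lin unfolding linear_iff by blast+
    have "?D (x,y) = ?D (x *\<^sub>R (1,0) + y *\<^sub>R (0,1))" by simp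
    also have "\<dots> = ?D (x *\<^sub>R (1,0)) + ?D (y *\<^sub>R (0,1))" by (rule A)
    also have "\<dots> = x *\<^sub>R ?D (1,0) + y *\<^sub>R ?D (0,1)" by (simp only: B)
    finally have "?D (x,y) = x *\<^sub>R ?D (1,0) + y *\<^sub>R ?D (0,1)" .
    then show ?thesis using h by simp
  qed
  have "?D = (\<lambda>h. fst h * px (rect a b T) f p + snd h * pt (rect a b T) f p)"
    unfolding px_def pt_def by (rule ext, rule eq)
  then show ?thesis using fd by simp
qed

lemma C_diff: "C_inf_on (rect a b T) f \<Longrightarrow> p \<in> rect a b T \<Longrightarrow> f differentiable (at p within rect a b T)"
  by (erule C_inf_on.cases) auto

lemma C_px: "C_inf_on (rect a b T) f \<Longrightarrow> C_inf_on (rect a b T) (px (rect a b T) f)"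
  by (erule C_inf_on.cases) auto

lemma C_pt: "C_inf_on (rect a b T) f \<Longrightarrow> C_inf_on (rect a b T) (pt (rect a b T) f)"
  by (erule C_inf_on.cases) auto

lemma C_cont: "C_inf_on (rect a b T) f \<Longrightarrow> continuous_on (rect a b T) f"
  using C_diff continuous_on_eq_continuous_within differentiable_imp_continuous_within by blast

lemma hdC: "C_inf_on (rect a b T) f \<Longrightarrow> p \<in> rect a b T \<Longrightarrow>
  (f has_derivative (\<lambda>h. fst h * px (rect a b T) f p + snd h * pt (rect a b T) f p)) (at p within rect a b T)"
  using hd C_diff by blast

lemma C_affine:
  assumes "\<forall>p\<in>rect a b T. h p = c0 + c1 * fst p + c2 * snd p"
  shows "C_inf_on (rect a b T) h"
proof -
  let ?X = "\<lambda>S' h. S' = rect a b T \<and> (\<exists>c0 c1 c2. \<forall>p\<in>rect a b T. h p = c0 + c1 * fst p + c2 * snd p)"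
  have X0: "?X (rect a b T) h" using assms by blast
  show ?thesis
  proof (rule C_inf_on.coinduct[of ?X, OF X0])
    fix S' h assume "?X S' h"
    then obtain c0 c1 c2 where S': "S' = rect a b T" and h: "\<forall>p\<in>rect a b T. h p = c0 + c1 * fst p + c2 * snd p" by blast
    have D: "(h has_derivative (\<lambda>v. c1 * fst v + c2 * snd v)) (at p within rect a b T)" if "p \<in> rect a b T" for p
    proof (rule has_derivative_transform[OF that])
      show "\<And>x. x \<in> rect a b T \<Longrightarrow> h x = c0 + c1 * fst x + c2 * snd x" using h by blast
      show "((\<lambda>x. c0 + c1 * fst x + c2 * snd x) has_derivative (\<lambda>v. c1 * fst v + c2 * snd v)) (at p within rect a b T)"
        by (auto intro!: derivative_eq_intros)
    qed
    have "\<forall>p\<in>rect a b T. px (rect a b T) h p = c1 + 0 * fst p + 0 * snd p"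
      using pxpt_of(1)[OF _ D] by simp
    moreover have "\<forall>p\<in>rect a b T. pt (rect a b T) h p = c2 + 0 * fst p + 0 * snd p"
      using pxpt_of(2)[OF _ D] by simp
    moreover have "\<forall>p\<in>rect a b T. h differentiable (at p within rect a b T)"
      using D differentiable_def by blast
    ultimately show "\<exists>S f. S' = S \<and> h = f \<and> (\<forall>p\<in>S. f differentiable (at p within S)) \<and> (?X S (px S f) \<or> C_inf_on S (px S f)) \<and> (?X S (pt S f) \<or> C_inf_on S (pt S f))" using S' by blast
  qed
qed

definition sopv :: "(((real \<times> real \<Rightarrow> real) \<times> (real \<times> real \<Rightarrow> real)) list) \<Rightarrow> real \<times> real \<Rightarrow> real" where
  "sopv L p = sum_list (map (\<lambda>(f,g). f p * g p) L)"

lemma sopv_deriv: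
  assumes "\<forall>(f,g)\<in>set L. C_inf_on (rect a b T) f \<and> C_inf_on (rect a b T) g" "p \<in> rect a b T"
  shows "(sopv L has_derivative (\<lambda>v. sum_list (map (\<lambda>(f,g). f p * (fst v * px (rect a b T) g p + snd v * pt (rect a b T) g p)
            + (fst v * px (rect a b T) f p + snd v * pt (rect a b T) f p) * g p) L))) (at p within rect a b T)"
  using assms(1)
proof (induction L)
  case Nil
  then show ?case by (simp add: sopv_def)
next
  case (Cons fg L)
  obtain f g where fg: "fg = (f,g)" by (cases fg)
  have cf: "C_inf_on (rect a b T) f" "C_inf_on (rect a b T) g" using Cons.prems fg by auto
  have IH: "(sopv L has_derivative (\<lambda>v. sum_list (map (\<lambda>(f,g). f p * (fst v * px (rect a b T) g p + snd v * pt (rect a b T) g p)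
            + (fst v * px (rect a b T) f p + snd v * pt (rect a b T) f p) * g p) L))) (at p within rect a b T)"
    using Cons by auto
  have e: "sopv (fg # L) = (\<lambda>q. f q * g q + sopv L q)" by (auto simp: sopv_def fg)
  show ?case unfolding e using has_derivative_add[OF has_derivative_mult[OF hdC[OF cf(1) assms(2)] hdC[OF cf(2) assms(2)]] IH]
    by (simp add: fg)
qed

lemma sopv_concat:
  "sopv (concat (map (\<lambda>(f,g). [(f, F g), (F f, g)]) L)) p = sum_list (map (\<lambda>(f,g). f p * F g p + F f p * g p) L)"
  by (induction L) (auto simp: sopv_def)

lemma C_sop:
  assumes "\<forall>(f,g)\<in>set L. C_inf_on (rect a b T) f \<and> C_inf_on (rect a b T) g"
    and "\<forall>p\<in>rect a b T. h p = sopv L p"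
  shows "C_inf_on (rect a b T) h"
proof -
  let ?X = "\<lambda>S' h. S' = rect a b T \<and> (\<exists>L. (\<forall>(f,g)\<in>set L. C_inf_on (rect a b T) f \<and> C_inf_on (rect a b T) g)
      \<and> (\<forall>p\<in>rect a b T. h p = sopv L p))"
  have X0: "?X (rect a b T) h" using assms by blast
  show ?thesis
  proof (rule C_inf_on.coinduct[of ?X, OF X0])
    fix S' h assume "?X S' h"
    then obtain L where S': "S' = rect a b T" and L: "\<forall>(f,g)\<in>set L. C_inf_on (rect a b T) f \<and> C_inf_on (rect a b T) g"
      and h: "\<forall>p\<in>rect a b T. h p = sopv L p" by blast
    have D: "(h has_derivative (\<lambda>v. sum_list (map (\<lambda>(f,g). f p * (fst v * px (rect a b T) g p + snd v * pt (rect a b T) g p)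
            + (fst v * px (rect a b T) f p + snd v * pt (rect a b T) f p) * g p) L))) (at p within rect a b T)"
      if "p \<in> rect a b T" for p
      using has_derivative_transform[OF that _ sopv_deriv[OF L that]] h by blast
    have ex: "sum_list (map (\<lambda>(f,g). f p * (fst v * G g p + snd v * H g p)
            + (fst v * G f p + snd v * H f p) * g p) L') = sum_list (map (\<lambda>(f,g). f p * G g p + G f p * g p) L')"
      if "v = (1::real,0::real)" for v p L' and G H :: "(real \<times> real \<Rightarrow> real) \<Rightarrow> real \<times> real \<Rightarrow> real"
      using that by (induction L') auto
    have et: "sum_list (map (\<lambda>(f,g). f p * (fst v * G g p + snd v * H g p)
            + (fst v * G f p + snd v * H f p) * g p) L') = sum_list (map (\<lambda>(f,g). f p * H g p + H f p * g p) L')"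
      if "v = (0::real,1::real)" for v p L' and G H :: "(real \<times> real \<Rightarrow> real) \<Rightarrow> real \<times> real \<Rightarrow> real"
      using that by (induction L') auto
    let ?Lx = "concat (map (\<lambda>(f,g). [(f, px (rect a b T) g), (px (rect a b T) f, g)]) L)"
    let ?Lt = "concat (map (\<lambda>(f,g). [(f, pt (rect a b T) g), (pt (rect a b T) f, g)]) L)"
    have "\<forall>p\<in>rect a b T. px (rect a b T) h p = sopv ?Lx p"
      using pxpt_of(1)[OF _ D] ex sopv_concat by simp
    moreover have "\<forall>p\<in>rect a b T. pt (rect a b T) h p = sopv ?Lt p"
      using pxpt_of(2)[OF _ D] et sopv_concat by simp
    moreover have "\<forall>(f,g)\<in>set ?Lx. C_inf_on (rect a b T) f \<and> C_inf_on (rect a b T) g"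
      using L C_px by fastforce
    moreover have "\<forall>(f,g)\<in>set ?Lt. C_inf_on (rect a b T) f \<and> C_inf_on (rect a b T) g"
      using L C_pt by fastforce
    moreover have "\<forall>p\<in>rect a b T. h differentiable (at p within rect a b T)"
      using D differentiable_def by blast
    ultimately show "\<exists>S f. S' = S \<and> h = f \<and> (\<forall>p\<in>S. f differentiable (at p within S)) \<and> (?X S (px S f) \<or> C_inf_on S (px S f)) \<and> (?X S (pt S f) \<or> C_inf_on S (pt S f))" using S' by blast
  qed
qed

lemma C_const: "C_inf_on (rect a b T) (\<lambda>p. c)"
  by (rule C_affine[of _ c 0 0]) simp

lemma C_fst: "C_inf_on (rect a b T) fst"
  by (rule C_affine[of _ 0 1 0]) simp

lemma C_snd: "C_inf_on (rect a b T) snd"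
  by (rule C_affine[of _ 0 0 1]) simp

lemma C_mult: "C_inf_on (rect a b T) f \<Longrightarrow> C_inf_on (rect a b T) g \<Longrightarrow> C_inf_on (rect a b T) (\<lambda>p. f p * g p)"
  by (rule C_sop[of "[(f,g)]"]) (auto simp: sopv_def)

lemma C_add: "C_inf_on (rect a b T) f \<Longrightarrow> C_inf_on (rect a b T) g \<Longrightarrow> C_inf_on (rect a b T) (\<lambda>p. f p + g p)"
  by (rule C_sop[of "[(f,\<lambda>_. 1),(g,\<lambda>_. 1)]"]) (auto simp: sopv_def C_const)

lemma C_sub: "C_inf_on (rect a b T) f \<Longrightarrow> C_inf_on (rect a b T) g \<Longrightarrow> C_inf_on (rect a b T) (\<lambda>p. f p - g p)"
  by (rule C_sop[of "[(f,\<lambda>_. 1),(g,\<lambda>_. -1)]"]) (auto simp: sopv_def C_const)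

lemma C_cong: "C_inf_on (rect a b T) f \<Longrightarrow> \<forall>p\<in>rect a b T. h p = f p \<Longrightarrow> C_inf_on (rect a b T) h"
  by (rule C_sop[of "[(f,\<lambda>_. 1)]"]) (auto simp: sopv_def C_const)

lemma C_pow: "C_inf_on (rect a b T) f \<Longrightarrow> C_inf_on (rect a b T) (\<lambda>p. f p ^ n)"
proof (induction n)
  case 0 then show ?case by (simp add: C_const)
next
  case (Suc n) then show ?case using C_mult[of f "\<lambda>p. f p ^ n"] by simp
qed

lemma FTCx:
  assumes "C_inf_on (rect a b T) G" "t \<in> {0..T}"
  shows "integral {a..b} (\<lambda>x. px (rect a b T) G (x,t)) = G (b,t) - G (a,t)"
proof -
  have "((\<lambda>x. G (x,t)) has_vector_derivative px (rect a b T) G (x,t)) (at x within {a..b})" if x: "x \<in> {a..b}" for x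
  proof -
    have p: "(x,t) \<in> rect a b T" using x assms(2) by (simp add: rect_def)
    have d1: "((\<lambda>x. (x,t)) has_derivative (\<lambda>h. (h,0))) (at x within {a..b})"
      by (auto intro!: derivative_eq_intros)
    have sub: "(\<lambda>x. (x,t)) ` {a..b} \<subseteq> rect a b T" using assms(2) by (auto simp: rect_def)
    have d2: "(G has_derivative (\<lambda>h. fst h * px (rect a b T) G (x,t) + snd h * pt (rect a b T) G (x,t))) (at (x,t) within (\<lambda>x. (x,t)) ` {a..b})"
      using has_derivative_subset[OF hdC[OF assms(1) p] sub] .
    have "((\<lambda>x. G (x,t)) has_derivative (\<lambda>h. h * px (rect a b T) G (x,t))) (at x within {a..b})"
      using diff_chain_within[OF d1 d2] by (simp add: o_def)
    then show ?thesis by (simp add: has_vector_derivative_def mult.commute)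
  qed
  then have "((\<lambda>x. px (rect a b T) G (x,t)) has_integral (G (b,t) - G (a,t))) {a..b}"
    using fundamental_theorem_of_calculus[of a b "\<lambda>x. G (x,t)"] ab by simp
  then show ?thesis by (rule integral_unique)
qed

lemma FTCt:
  assumes "C_inf_on (rect a b T) G" "x \<in> {a..b}"
  shows "integral {0..T} (\<lambda>t. pt (rect a b T) G (x,t)) = G (x,T) - G (x,0)"
proof -
  have "((\<lambda>t. G (x,t)) has_vector_derivative pt (rect a b T) G (x,t)) (at t within {0..T})" if t: "t \<in> {0..T}" for t
  proof -
    have p: "(x,t) \<in> rect a b T" using t assms(2) by (simp add: rect_def)
    have d1: "((\<lambda>t. (x,t)) has_derivative (\<lambda>h. (0,h))) (at t within {0..T})"
      by (auto intro!: derivative_eq_intros)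
    have sub: "(\<lambda>t. (x,t)) ` {0..T} \<subseteq> rect a b T" using assms(2) by (auto simp: rect_def)
    have d2: "(G has_derivative (\<lambda>h. fst h * px (rect a b T) G (x,t) + snd h * pt (rect a b T) G (x,t))) (at (x,t) within (\<lambda>t. (x,t)) ` {0..T})"
      using has_derivative_subset[OF hdC[OF assms(1) p] sub] .
    have "((\<lambda>t. G (x,t)) has_derivative (\<lambda>h. h * pt (rect a b T) G (x,t))) (at t within {0..T})"
      using diff_chain_within[OF d1 d2] by (simp add: o_def)
    then show ?thesis by (simp add: has_vector_derivative_def mult.commute)
  qed
  then have "((\<lambda>t. pt (rect a b T) G (x,t)) has_integral (G (x,T) - G (x,0))) {0..T}"
    using fundamental_theorem_of_calculus[of 0 T "\<lambda>t. G (x,t)"] T0 by simp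
  then show ?thesis by (rule integral_unique)
qed

lemma pt_zero_side:
  assumes "C_inf_on (rect a b T) G" "x \<in> {a..b}" "\<forall>t\<in>{0..T}. G (x,t) = 0" "t \<in> {0..T}"
  shows "pt (rect a b T) G (x,t) = 0"
proof -
  have p: "(x,t) \<in> rect a b T" using assms by (simp add: rect_def)
  have d1: "((\<lambda>t. (x,t)) has_derivative (\<lambda>h. (0,h))) (at t within {0..T})"
    by (auto intro!: derivative_eq_intros)
  have sub: "(\<lambda>t. (x,t)) ` {0..T} \<subseteq> rect a b T" using assms(2) by (auto simp: rect_def)
  have d2: "(G has_derivative (\<lambda>h. fst h * px (rect a b T) G (x,t) + snd h * pt (rect a b T) G (x,t))) (at (x,t) within (\<lambda>t. (x,t)) ` {0..T})"
    using has_derivative_subset[OF hdC[OF assms(1) p] sub] .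
  have "((\<lambda>t. G (x,t)) has_derivative (\<lambda>h. h * pt (rect a b T) G (x,t))) (at t within {0..T})"
    using diff_chain_within[OF d1 d2] by (simp add: o_def)
  then have v1: "((\<lambda>t. G (x,t)) has_vector_derivative pt (rect a b T) G (x,t)) (at t within {0..T})"
    by (simp add: has_vector_derivative_def mult.commute)
  have "((\<lambda>t. (0::real)) has_vector_derivative 0) (at t within {0..T})" by simp
  then have v2: "((\<lambda>t. G (x,t)) has_vector_derivative 0) (at t within {0..T})"
    unfolding has_vector_derivative_def using assms(3,4) has_derivative_transform by (metis (no_types, lifting))
  have nb: "at t within {0..T} \<noteq> bot" using T0 assms(4) by (simp add: trivial_limit_within)
  show ?thesis using vector_derivative_unique_within[OF nb v1 v2] .
qed

lemma iter_int:
  fixes F :: "real \<times> real \<Rightarrow> real"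
  assumes "continuous_on (rect a b T) F"
  shows "integral {0..T} (\<lambda>t. integral {a..b} (\<lambda>x. F (x,t))) = integral (rect a b T) F"
    "integral {a..b} (\<lambda>x. integral {0..T} (\<lambda>t. F (x,t))) = integral (rect a b T) F"
proof -
  have c: "continuous_on (cbox (a,0) (b,T)) (\<lambda>(x,y). F (x,y))" using assms rect_cbox by simp
  have i2: "integral (rect a b T) F = integral {a..b} (\<lambda>x. integral {0..T} (\<lambda>t. F (x,t)))"
    using integral_prod_continuous[of a 0 b T F] assms rect_cbox by simp
  then show "integral {a..b} (\<lambda>x. integral {0..T} (\<lambda>t. F (x,t))) = integral (rect a b T) F" by simp
  show "integral {0..T} (\<lambda>t. integral {a..b} (\<lambda>x. F (x,t))) = integral (rect a b T) F"
    using integral_swap_continuous[of a 0 b T "\<lambda>x t. F (x,t)"] c i2 by simp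
qed

lemma px_add: "C_inf_on (rect a b T) f \<Longrightarrow> C_inf_on (rect a b T) g \<Longrightarrow> p \<in> rect a b T \<Longrightarrow>
    px (rect a b T) (\<lambda>q. f q + g q) p = px (rect a b T) f p + px (rect a b T) g p"
  using pxpt_of(1)[OF _ has_derivative_add[OF hdC hdC]] by simp
lemma pt_add: "C_inf_on (rect a b T) f \<Longrightarrow> C_inf_on (rect a b T) g \<Longrightarrow> p \<in> rect a b T \<Longrightarrow>
    pt (rect a b T) (\<lambda>q. f q + g q) p = pt (rect a b T) f p + pt (rect a b T) g p"
  using pxpt_of(2)[OF _ has_derivative_add[OF hdC hdC]] by simp
lemma px_sub: "C_inf_on (rect a b T) f \<Longrightarrow> C_inf_on (rect a b T) g \<Longrightarrow> p \<in> rect a b T \<Longrightarrow>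
    px (rect a b T) (\<lambda>q. f q - g q) p = px (rect a b T) f p - px (rect a b T) g p"
  using pxpt_of(1)[OF _ has_derivative_diff[OF hdC hdC]] by simp
lemma pt_sub: "C_inf_on (rect a b T) f \<Longrightarrow> C_inf_on (rect a b T) g \<Longrightarrow> p \<in> rect a b T \<Longrightarrow>
    pt (rect a b T) (\<lambda>q. f q - g q) p = pt (rect a b T) f p - pt (rect a b T) g p"
  using pxpt_of(2)[OF _ has_derivative_diff[OF hdC hdC]] by simp
lemma px_mult: "C_inf_on (rect a b T) f \<Longrightarrow> C_inf_on (rect a b T) g \<Longrightarrow> p \<in> rect a b T \<Longrightarrow>
    px (rect a b T) (\<lambda>q. f q * g q) p = f p * px (rect a b T) g p + px (rect a b T) f p * g p"
  using pxpt_of(1)[OF _ has_derivative_mult[OF hdC hdC]] by simp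
lemma pt_mult: "C_inf_on (rect a b T) f \<Longrightarrow> C_inf_on (rect a b T) g \<Longrightarrow> p \<in> rect a b T \<Longrightarrow>
    pt (rect a b T) (\<lambda>q. f q * g q) p = f p * pt (rect a b T) g p + pt (rect a b T) f p * g p"
  using pxpt_of(2)[OF _ has_derivative_mult[OF hdC hdC]] by simp

lemma int_rect: fixes f :: "real \<times> real \<Rightarrow> real" shows "continuous_on (rect a b T) f \<Longrightarrow> f integrable_on rect a b T"
  using integrable_continuous[of "(a,0)" "(b,T)" f] rect_cbox by simp

lemma flux_eq: "even r \<Longrightarrow> r \<ge> 2 \<Longrightarrow> flux r S u = (\<lambda>p. px S u p ^ (r - 1))"
proof (rule ext)
  fix p assume r: "even r" "r \<ge> 2"
  let ?y = "px S u p"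
  have "\<bar>?y\<bar> ^ (r - 2) = ?y ^ (r - 2)" using r by (simp add: power_even_abs)
  moreover have "r - 1 = Suc (r - 2)" using r by simp
  ultimately show "flux r S u p = ?y ^ (r - 1)" by (simp add: flux_def mult.commute)
qed

lemma part1:
  assumes r: "even r" "r \<ge> 2"
    and u: "C_inf_on (rect a b T) u" and ub: "\<forall>t\<in>{0..T}. u (a, t) = 0 \<and> u (b, t) = 0"
    and w: "admissible a b T w"
  shows "first_var r a b T u w =
              integral {0..T} (\<lambda>t. integral {a..b} (\<lambda>x.
                 rHS r (rect a b T) u (x, t) * w (x, t)))"
proof -
  let ?S = "rect a b T"
  have wC: "C_inf_on ?S w" and wt0: "\<forall>x\<in>{a..b}. w (x, 0) = 0 \<and> w (x, T) = 0"
    and wx0: "\<forall>t\<in>{0..T}. w (a, t) = 0 \<and> w (b, t) = 0" using w by (auto simp: admissible_def)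
  define m where "m = flux r ?S u"
  have mC: "C_inf_on ?S m" unfolding m_def flux_eq[OF r] by (intro C_pow C_px u)
  define G where "G = (\<lambda>q. m q * pt ?S w q + m q * u q * px ?S w q - m q * w q * px ?S u q - px ?S m q * u q * w q)"
  define H where "H = (\<lambda>q. px ?S m q * w q)"
  define R where "R = (\<lambda>q. rHS r ?S u q * w q)"
  note CC = C_px C_pt C_mult C_add C_sub u wC mC
  have GC: "C_inf_on ?S G" unfolding G_def by (intro CC)
  have HC: "C_inf_on ?S H" unfolding H_def by (intro CC)
  have RC: "C_inf_on ?S R" unfolding R_def rHS_def m_def[symmetric] by (intro CC)
  have vu: "var_u ?S u w = (\<lambda>q. pt ?S w q - w q * px ?S u q + u q * px ?S w q)"
    by (rule ext) (simp add: var_u_def)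
  have key: "m p * px ?S (var_u ?S u w) p = px ?S G p - pt ?S H p + R p" if p: "p \<in> ?S" for p
  proof -
    note rules = px_add[OF _ _ p] px_sub[OF _ _ p] px_mult[OF _ _ p] pt_add[OF _ _ p] pt_sub[OF _ _ p] pt_mult[OF _ _ p]
      C_px C_pt C_mult C_add C_sub u wC mC
    show ?thesis unfolding vu G_def H_def R_def rHS_def m_def[symmetric]
      by (simp add: rules algebra_simps)
  qed
  have "first_var r a b T u w = integral {0..T} (\<lambda>t. integral {a..b} (\<lambda>x. px ?S G (x,t) - pt ?S H (x,t) + R (x,t)))"
    unfolding first_var_def m_def[symmetric]
    by (intro integral_cong) (rule key, simp add: rect_def)
  also have "\<dots> = integral ?S (\<lambda>p. px ?S G p - pt ?S H p + R p)"
    by (rule iter_int(1)) (intro C_cont CC GC HC RC)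
  also have "\<dots> = integral ?S (px ?S G) - integral ?S (pt ?S H) + integral ?S R"
    by (simp add: integral_add integral_diff int_rect C_cont CC GC HC RC)
  also have "integral ?S (px ?S G) = 0"
  proof -
    have "integral ?S (px ?S G) = integral {0..T} (\<lambda>t. integral {a..b} (\<lambda>x. px ?S G (x,t)))"
      by (rule iter_int(1)[symmetric]) (intro C_cont CC GC)
    also have "\<dots> = integral {0..T} (\<lambda>t. 0)"
    proof (intro integral_cong)
      fix t assume t: "t \<in> {0..T}"
      have "pt ?S w (a,t) = 0" "pt ?S w (b,t) = 0"
        using pt_zero_side[OF wC _ _ t] wx0 ab by auto
      then show "integral {a..b} (\<lambda>x. px ?S G (x,t)) = 0"
        unfolding FTCx[OF GC t] using ub wx0 t by (simp add: G_def)
    qed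
    finally show ?thesis by simp
  qed
  also have "integral ?S (pt ?S H) = 0"
  proof -
    have "integral ?S (pt ?S H) = integral {a..b} (\<lambda>x. integral {0..T} (\<lambda>t. pt ?S H (x,t)))"
      by (rule iter_int(2)[symmetric]) (intro C_cont CC HC)
    also have "\<dots> = integral {a..b} (\<lambda>x. 0)"
    proof (intro integral_cong)
      fix x assume x: "x \<in> {a..b}"
      show "integral {0..T} (\<lambda>t. pt ?S H (x,t)) = 0"
        unfolding FTCt[OF HC x] using wt0 x by (simp add: H_def)
    qed
    finally show ?thesis by simp
  qed
  also have "integral ?S R = integral {0..T} (\<lambda>t. integral {a..b} (\<lambda>x. R (x,t)))"
    by (rule iter_int(1)[symmetric]) (intro C_cont RC)
  finally show ?thesis by (simp add: R_def)
qed

lemma mem_box_rect: "p \<in> box (a,0) (b,T) \<longleftrightarrow> a < fst p \<and> fst p < b \<and> 0 < snd p \<and> snd p < T"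
  by (cases p) (auto simp: mem_box Basis_prod_def)

lemma part2:
  assumes r: "even r" "r \<ge> 2"
    and u: "C_inf_on (rect a b T) u" and ub: "\<forall>t\<in>{0..T}. u (a, t) = 0 \<and> u (b, t) = 0"
    and H0: "\<forall>w. admissible a b T w \<longrightarrow> first_var r a b T u w = 0"
  shows "\<forall>p\<in>rect a b T. rHS r (rect a b T) u p = 0"
proof -
  let ?S = "rect a b T"
  define R0 where "R0 = rHS r ?S u"
  define phi where "phi = (\<lambda>p::real\<times>real. (fst p - a) * (b - fst p) * snd p * (T - snd p))"
  define w0 where "w0 = (\<lambda>p. R0 p * phi p)"
  have mC: "C_inf_on ?S (flux r ?S u)" unfolding flux_eq[OF r] by (intro C_pow C_px u)
  note CC = C_px C_pt C_mult C_add C_sub u mC C_fst C_snd C_const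
  have R0C: "C_inf_on ?S R0" unfolding R0_def rHS_def by (intro CC)
  have phiC: "C_inf_on ?S phi" unfolding phi_def by (intro CC)
  have w0C: "C_inf_on ?S w0" unfolding w0_def using R0C phiC by (intro CC)
  have adm: "admissible a b T w0" unfolding admissible_def using w0C by (simp add: w0_def phi_def)
  have "0 = first_var r a b T u w0" using H0 adm by simp
  also have "\<dots> = integral {0..T} (\<lambda>t. integral {a..b} (\<lambda>x. R0 (x, t) * w0 (x, t)))"
    using part1[OF r u ub adm] by (simp add: R0_def)
  also have "\<dots> = integral ?S (\<lambda>p. R0 p * w0 p)"
    by (rule iter_int(1)) (intro C_cont CC R0C w0C)
  finally have i0: "integral ?S (\<lambda>p. R0 p * w0 p) = 0" by simp
  have contg: "continuous_on (cbox (a,0) (b,T)) (\<lambda>p. R0 p * w0 p)"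
    using C_cont[OF C_mult[OF R0C w0C]] rect_cbox by simp
  have hi: "((\<lambda>p. R0 p * w0 p) has_integral 0) (cbox (a,0) (b,T))"
    using integrable_integral[OF int_rect[OF C_cont[OF C_mult[OF R0C w0C]]]] i0 rect_cbox by simp
  have nn: "0 \<le> R0 p * w0 p" if "p \<in> box (a,0) (b,T)" for p
  proof -
    have "0 \<le> phi p" using that unfolding mem_box_rect phi_def by simp
    then show ?thesis unfolding w0_def
      by (metis mult.assoc mult_nonneg_nonneg zero_le_square)
  qed
  have ne: "box (a,0) (b,T) \<noteq> {}"
  proof -
    have "((a+b)/2, T/2) \<in> box (a,0) (b,T)" unfolding mem_box_rect using ab T0 by simp
    then show ?thesis by blast
  qed
  have z: "R0 p * w0 p = 0" if "p \<in> cbox (a,0) (b,T)" for p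
    using has_integral_0_cbox_imp_0[OF contg nn hi ne that] by simp
  have zb: "R0 p = 0" if "p \<in> box (a,0) (b,T)" for p
  proof -
    have "0 < phi p" using that unfolding mem_box_rect phi_def by simp
    moreover have "R0 p * R0 p * phi p = 0" using z[OF subsetD[OF box_subset_cbox that]] by (simp add: w0_def mult.assoc)
    ultimately show ?thesis by simp
  qed
  show ?thesis
  proof
    fix p assume p: "p \<in> ?S"
    have c: "continuous_on (closure (box (a,0) (b,T))) R0" using C_cont[OF R0C] ne rect_cbox by simp
    have "p \<in> closure (box (a,0) (b,T))" using p ne rect_cbox by simp
    then have "R0 p = 0" using continuous_constant_on_closure[OF c zb] by blast
    then show "rHS r ?S u p = 0" by (simp add: R0_def)
  qed
qed

end

theorem mainTheorem2:
  fixes r :: nat and a b T :: real and u :: "real \<times> real \<Rightarrow> real"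
  assumes "even r" and "r \<ge> 2" and "a < b" and "T > 0"
    and "C_inf_on (rect a b T) u"
    and "\<forall>t\<in>{0..T}. u (a, t) = 0 \<and> u (b, t) = 0"
  shows "(\<forall>w. admissible a b T w \<longrightarrow>
            first_var r a b T u w =
              integral {0..T} (\<lambda>t. integral {a..b} (\<lambda>x.
                 rHS r (rect a b T) u (x, t) * w (x, t))))
       \<and> ((\<forall>w. admissible a b T w \<longrightarrow> first_var r a b T u w = 0)
            \<longleftrightarrow> (\<forall>p\<in>rect a b T. rHS r (rect a b T) u p = 0))"
proof (intro conjI iffI allI impI)
  fix w assume w: "admissible a b T w"
  show "first_var r a b T u w = integral {0..T} (\<lambda>t. integral {a..b} (\<lambda>x. rHS r (rect a b T) u (x, t) * w (x, t)))"
    using part1[OF assms(3,4,1,2,5,6) w] .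
next
  assume "\<forall>w. admissible a b T w \<longrightarrow> first_var r a b T u w = 0"
  then show "\<forall>p\<in>rect a b T. rHS r (rect a b T) u p = 0"
    using part2[OF assms(3,4,1,2,5,6)] by blast
next
  fix w assume z: "\<forall>p\<in>rect a b T. rHS r (rect a b T) u p = 0" and w: "admissible a b T w"
  have "first_var r a b T u w = integral {0..T} (\<lambda>t. integral {a..b} (\<lambda>x. rHS r (rect a b T) u (x, t) * w (x, t)))"
    using part1[OF assms(3,4,1,2,5,6) w] .
  also have "\<dots> = integral {0..T} (\<lambda>t. integral {a..b} (\<lambda>x. 0))"
  proof (intro integral_cong)
    fix t x assume "t \<in> {0..T}" "x \<in> {a..b}"
    then have "(x,t) \<in> rect a b T" by (simp add: rect_def)
    then show "rHS r (rect a b T) u (x, t) * w (x, t) = 0" using z by simp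
  qed
  finally show "first_var r a b T u w = 0" by simp
qed

end
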